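(* Let $q\in\mathbb{C}\setminus\{0\}$, $\hat E_q(x)=\sum_{m\ge0}(-1)^mq^{m(m-1)/2}x^m$, and for $k\ge1$ let $P_k=\sum_{j=0}^{k-1}q^{j(j-1)/2}(-x)^j$. For every integer $n\ge2$, $$(x\sigma_q+1)\frac{1}{P_{n-1}}(x^2\sigma_q-1)\frac{1}{P_{n-2}}(x^3\sigma_q+1)\cdots\frac{1}{P_1}\left(x^n\sigma_q-(-1)^n\right)\hat E_q(x)^n=(-1)^{n(n-1)/2}P_n,$$ where the operator on the left is the composition, from left to right, of $\left(x\sigma_q+1\right)$ followed, for $i=2,\dots,n$, by $\frac{1}{P_{n+1-i}}\left(x^{i}\sigma_q-(-1)^{i}\right)$ (note $P_1=1$).
   Context: $\sigma_qf(x)=f(qx)$ acting on the field $\mathbb{C}[x^{-1}][[x]]$ of formal Laurent series; field elements act as multiplication operators and products of operators denote composition. *)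

theory Defs
  imports "HOL-Computational_Algebra.Formal_Laurent_Series"
begin

(* q-dilation operator sigma_q f(x) = f(qx) on formal Laurent series:
   the coefficient of x^k is multiplied by q^k (k an integer). *)
lift_definition qdil :: "complex \<Rightarrow> complex fls \<Rightarrow> complex fls"
  is "\<lambda>q f k. q powi k * f k"
  by (auto elim!: eventually_mono)

definition Ehat :: "complex \<Rightarrow> complex fls" where
  "Ehat q = fps_to_fls (Abs_fps (\<lambda>m. (-1) ^ m * q ^ (m * (m - 1) div 2)))"

definition Pq :: "complex \<Rightarrow> nat \<Rightarrow> complex fls" where
  "Pq q k = (\<Sum>j<k. fls_const (q ^ (j * (j - 1) div 2)) * (- fls_X) ^ j)"

definition opB :: "complex \<Rightarrow> nat \<Rightarrow> nat \<Rightarrow> complex fls \<Rightarrow> complex fls" where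
  "opB q n i f = (fls_X ^ i * qdil q f - (-1) ^ i * f) / Pq q (n + 1 - i)"

definition opA :: "complex \<Rightarrow> complex fls \<Rightarrow> complex fls" where
  "opA q f = fls_X * qdil q f + f"

definition bigOp :: "complex \<Rightarrow> nat \<Rightarrow> complex fls \<Rightarrow> complex fls" where
  "bigOp q n f = opA q (foldr (opB q n) [2..<n+1] f)"

end

theory Submission imports Defs begin
unbundle fps_syntax

lemma qdil_nth [simp]: "qdil q f $$ k = q powi k * f $$ k"
  by (simp add: qdil.rep_eq)

lemma qdil_add [simp]: "qdil q (f + g) = qdil q f + qdil q g"
  by (simp add: fls_eq_iff algebra_simps)
lemma qdil_diff [simp]: "qdil q (f - g) = qdil q f - qdil q g"
  by (simp add: fls_eq_iff algebra_simps)
lemma qdil_uminus [simp]: "qdil q (- f) = - qdil q f"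
  by (simp add: fls_eq_iff algebra_simps)
lemma qdil_zero [simp]: "qdil q 0 = 0"
  by (simp add: fls_eq_iff)
lemma qdil_one [simp]: "qdil q 1 = 1"
  by (simp add: fls_eq_iff)

lemma qdil_subdegree:
  assumes "q \<noteq> 0" "f \<noteq> 0"
  shows "fls_subdegree (qdil q f) = fls_subdegree f"
  by (rule fls_subdegree_eqI) (use assms in \<open>auto simp: nth_fls_subdegree_nonzero\<close>)

lemma qdil_mult:
  assumes q: "q \<noteq> 0"
  shows "qdil q (f * g) = qdil q f * qdil q g"
proof (cases "f = 0 \<or> g = 0")
  case True then show ?thesis by auto
next
  case False
  then have f: "f \<noteq> 0" and g: "g \<noteq> 0" by auto
  show ?thesis
  proof (rule fls_eqI)
    fix n
    have "(qdil q f * qdil q g) $$ n =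
       (\<Sum>i=fls_subdegree f..n - fls_subdegree g. q powi i * f $$ i * (q powi (n - i) * g $$ (n - i)))"
      using fls_times_nth(2)[of "qdil q f" "qdil q g" n] qdil_subdegree[OF q f] qdil_subdegree[OF q g]
      by (simp add: mult.assoc)
    also have "\<dots> = (\<Sum>i=fls_subdegree f..n - fls_subdegree g. q powi n * (f $$ i * g $$ (n - i)))"
      by (rule sum.cong) (auto simp: q power_int_diff field_simps)
    also have "\<dots> = q powi n * (f * g) $$ n"
      by (simp add: fls_times_nth(2) sum_distrib_left)
    finally show "qdil q (f * g) $$ n = (qdil q f * qdil q g) $$ n" by simp
  qed
qed

lemma qdil_inverse:
  assumes q: "q \<noteq> 0"
  shows "qdil q (inverse f) = inverse (qdil q f)"
proof (cases "f = 0")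
  case True then show ?thesis by simp
next
  case False
  have "qdil q f * qdil q (inverse f) = 1"
    using False by (simp add: qdil_mult[OF q, symmetric])
  then show ?thesis by (metis inverse_unique)
qed

lemma qdil_divide:
  assumes q: "q \<noteq> 0"
  shows "qdil q (f / g) = qdil q f / qdil q g"
  by (simp add: divide_inverse qdil_mult[OF q] qdil_inverse[OF q])

lemma qdil_power:
  assumes q: "q \<noteq> 0"
  shows "qdil q (f ^ m) = qdil q f ^ m"
  by (induction m) (simp_all add: qdil_mult[OF q])


definition ec :: "complex \<Rightarrow> nat \<Rightarrow> complex" where
  "ec q m = (-1) ^ m * q ^ (m * (m - 1) div 2)"

lemma ec_nonzero: "q \<noteq> 0 \<Longrightarrow> ec q m \<noteq> 0"
  by (simp add: ec_def)

lemma tri_Suc: "Suc m * m div 2 = m * (m - 1) div 2 + m"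
proof -
  have "Suc m * m = m * (m - 1) + 2 * m" by (cases m) (simp_all add: algebra_simps)
  then show ?thesis by simp
qed

lemma ec_Suc: "ec q (Suc m) = - (q ^ m * ec q m)"
proof -
  have "q ^ (Suc m * m div 2) = q ^ m * q ^ (m * (m - 1) div 2)"
    by (metis tri_Suc power_add mult.commute)
  then show ?thesis by (simp add: ec_def mult_ac)
qed

lemma Ehat_nth: "Ehat q $$ n = (if n < 0 then 0 else ec q (nat n))"
  by (simp add: Ehat_def ec_def)

lemma neg1_pow_nth: "((-1) ^ j * f) $$ n = (-1) ^ j * (f $$ n :: 'a::comm_ring_1)"
  by (cases "even j") simp_all

lemma const_negX_pow_nth: "(fls_const c * (- fls_X) ^ j) $$ n = (if n = int j then c * (-1) ^ j else (0::complex))"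
proof -
  have "(- fls_X) ^ j = (-1) ^ j * (fls_X ^ j :: complex fls)"
    by (rule power_minus)
  then show ?thesis by (simp only: fls_mult_const_nth neg1_pow_nth fls_X_power_nth) simp
qed

lemma Pq_nth: "Pq q k $$ n = (if n < 0 \<or> nat n \<ge> k then 0 else ec q (nat n))"
proof -
  have "Pq q k $$ n = (\<Sum>j<k. (if n = int j then ec q j else 0))"
    unfolding Pq_def fls_nth_sum
    by (rule sum.cong[OF refl], subst const_negX_pow_nth) (simp add: ec_def mult.commute)
  also have "\<dots> = (if n < 0 \<or> nat n \<ge> k then 0 else ec q (nat n))"
  proof (cases "n < 0 \<or> nat n \<ge> k")
    case True then show ?thesis by (auto intro!: sum.neutral)
  next
    case False
    then have "(\<Sum>j<k. (if n = int j then ec q j else 0)) = (\<Sum>j<k. (if j = nat n then ec q j else 0))"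
      by (intro sum.cong) auto
    also have "\<dots> = ec q (nat n)" using False by (simp)
    finally show ?thesis using False by simp
  qed
  finally show ?thesis .
qed

lemma X_times_nth: "(fls_X * (f :: complex fls)) $$ n = f $$ (n - 1)"
  by (simp only: fls_X_times_conv_shift(1) fls_shift_nth) simp

lemma Ehat_sigma: "fls_X * qdil q (Ehat q) = 1 - Ehat q"
proof (rule fls_eqI)
  fix n :: int
  show "(fls_X * qdil q (Ehat q)) $$ n = (1 - Ehat q) $$ n"
  proof (cases "n \<le> 0")
    case True then show ?thesis by (cases "n = 0") (auto simp: X_times_nth Ehat_nth ec_def)
  next
    case False
    define m where "m = nat (n - 1)"
    have m: "n = int m + 1" using False by (simp add: m_def)
    show ?thesis using m by (simp add: X_times_nth Ehat_nth nat_add_distrib ec_Suc)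
  qed
qed

lemma Pq_sigma: "fls_X * qdil q (Pq q k) = 1 - Pq q (Suc k)"
proof (rule fls_eqI)
  fix n :: int
  show "(fls_X * qdil q (Pq q k)) $$ n = (1 - Pq q (Suc k)) $$ n"
  proof (cases "n \<le> 0")
    case True then show ?thesis by (cases "n = 0") (auto simp: X_times_nth Pq_nth ec_def)
  next
    case False
    define m where "m = nat (n - 1)"
    have m: "n = int m + 1" using False by (simp add: m_def)
    show ?thesis using m by (simp add: X_times_nth Pq_nth nat_add_distrib ec_Suc)
  qed
qed

lemma Pq_0: "Pq q 0 = 0" by (simp add: Pq_def)
lemma Pq_1: "Pq q 1 = 1" by (simp add: Pq_def)

lemma Pq_inj:
  assumes q: "q \<noteq> 0" and ab: "a \<noteq> b"
  shows "Pq q a \<noteq> Pq q b"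
proof -
  { fix a b :: nat assume "a < b"
    then have "Pq q a $$ int a \<noteq> Pq q b $$ int a" by (simp add: Pq_nth ec_nonzero[OF q])
    then have "Pq q a \<noteq> Pq q b" by auto }
  from this[of a b] this[of b a] ab show ?thesis by (metis linorder_neqE_nat)
qed


fun dd :: "(complex fls \<Rightarrow> complex fls) \<Rightarrow> (nat \<Rightarrow> complex fls) \<Rightarrow> nat \<Rightarrow> nat \<Rightarrow> complex fls" where
  "dd f p i 0 = f (p i)"
| "dd f p i (Suc k) = (dd f p (Suc i) k - dd f p i k) / (p (i + Suc k) - p i)"

lemma dd_transport:
  assumes q: "q \<noteq> 0" and d: "d \<noteq> 0"
    and hf: "\<And>l. qdil q (f (p l)) = c * f (p (Suc l))"
    and hp: "\<And>a b. qdil q (p a - p b) = d * (p (Suc a) - p (Suc b))"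
  shows "qdil q (dd f p i k) = c / d ^ k * dd f p (Suc i) k"
proof (induction k arbitrary: i)
  case 0 then show ?case using hf by simp
next
  case (Suc k)
  have "qdil q (dd f p i (Suc k)) =
     (qdil q (dd f p (Suc i) k) - qdil q (dd f p i k)) / qdil q (p (i + Suc k) - p i)"
    by (simp add: qdil_divide[OF q])
  also have "\<dots> = (c / d ^ k * dd f p (Suc (Suc i)) k - c / d ^ k * dd f p (Suc i) k) /
      (d * (p (Suc (i + Suc k)) - p (Suc i)))"
    by (simp only: Suc.IH hp)
  also have "\<dots> = c / d ^ Suc k * dd f p (Suc i) (Suc k)"
    using d by (simp add: field_simps)
  finally show ?case .
qed

lemma dd_leibniz:
  assumes inj: "\<And>a b. a \<noteq> b \<Longrightarrow> p a \<noteq> p b"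
  shows "dd (\<lambda>t. (t - c) * g t) p i (Suc k) = (p i - c) * dd g p i (Suc k) + dd g p (Suc i) k"
proof (induction k arbitrary: i)
  case 0
  have ne: "p (Suc i) - p i \<noteq> 0" using inj[of "Suc i" i] by simp
  show ?case using ne by (simp add: field_simps)
next
  case (Suc k)
  define G where "G = dd g p"
  define D where "D = p (i + Suc (Suc k)) - p i"
  define D1 where "D1 = p (Suc i + Suc k) - p (Suc i)"
  have D: "D \<noteq> 0" using inj[of "i + Suc (Suc k)" i] by (simp add: D_def)
  have D1: "D1 \<noteq> 0" using inj[of "Suc i + Suc k" "Suc i"] by (simp add: D1_def)
  have u: "G (Suc i) (Suc k) * D1 = G (Suc (Suc i)) k - G (Suc i) k"
    using D1 by (simp add: G_def D1_def)
  have u2: "G i (Suc (Suc k)) = (G (Suc i) (Suc k) - G i (Suc k)) / D"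
    by (simp add: G_def D_def)
  have "dd (\<lambda>t. (t - c) * g t) p i (Suc (Suc k)) =
     ((p (Suc i) - c) * G (Suc i) (Suc k) + G (Suc (Suc i)) k - ((p i - c) * G i (Suc k) + G (Suc i) k)) / D"
  proof -
    have "dd (\<lambda>t. (t - c) * g t) p i (Suc (Suc k)) =
      (dd (\<lambda>t. (t - c) * g t) p (Suc i) (Suc k) - dd (\<lambda>t. (t - c) * g t) p i (Suc k)) / D"
      by (simp only: dd.simps(2)[of _ _ i "Suc k"] D_def)
    then show ?thesis by (simp only: Suc.IH G_def)
  qed
  also have "\<dots> = ((p (Suc i) - c) * G (Suc i) (Suc k) + G (Suc i) (Suc k) * D1 - ((p i - c) * G i (Suc k))) / D"
    using u by (simp add: algebra_simps)
  also have "\<dots> = (p i - c) * G i (Suc (Suc k)) + G (Suc i) (Suc k)"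
    unfolding u2 using D by (simp add: field_simps D_def D1_def)
  finally show ?case by (simp add: G_def)
qed

lemma dd_one: "dd (\<lambda>t. 1) p i k = (if k = 0 then 1 else 0)"
  by (induction k arbitrary: i) auto

lemma dd_pow:
  assumes inj: "\<And>a b. a \<noteq> b \<Longrightarrow> p a \<noteq> p b"
  shows "m \<le> k \<Longrightarrow> dd (\<lambda>t. (t - c) ^ m) p i k = (if m = k then 1 else 0)"
proof (induction m arbitrary: i k)
  case 0 then show ?case by (simp add: dd_one)
next
  case (Suc m)
  then obtain k' where k: "k = Suc k'" by (cases k) auto
  have "dd (\<lambda>t. (t - c) ^ Suc m) p i k = dd (\<lambda>t. (t - c) * (t - c) ^ m) p i (Suc k')"
    by (simp add: k)
  also have "\<dots> = (p i - c) * dd (\<lambda>t. (t - c) ^ m) p i (Suc k') + dd (\<lambda>t. (t - c) ^ m) p (Suc i) k'"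
    by (rule dd_leibniz[OF inj])
  also have "\<dots> = (if Suc m = k then 1 else 0)"
    using Suc.prems k by (simp add: Suc.IH)
  finally show ?case .
qed


lemma qdil_neg1_pow: "qdil q ((-1) ^ m) = (-1) ^ m"
  by (simp add: fls_eq_iff) (cases "even m"; simp)

fun sg :: "nat \<Rightarrow> nat \<Rightarrow> nat" where
  "sg n 0 = n"
| "sg n (Suc k) = sg n k + (n - k)"

lemma sg_closed: "k \<le> n \<Longrightarrow> 2 * sg n k + k * (k - 1) = 2 * n + 2 * k * n"
proof (induction k)
  case 0 then show ?case by simp
next
  case (Suc k)
  then have "2 * sg n k + k * (k - 1) = 2 * n + 2 * k * n" by simp
  moreover have "Suc k * k = k * (k - 1) + 2 * k" by (cases k) (simp_all add: algebra_simps)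
  ultimately show ?case using Suc.prems by (simp add: algebra_simps)
qed

lemma sg_final:
  assumes "n \<ge> 2"
  shows "even (sg n (n - 1) + 1 + n * (n - 1) div 2)"
proof -
  have h: "2 * sg n (n - 1) + (n - 1) * (n - 2) = 2 * n + 2 * (n - 1) * n"
    using sg_closed[of "n - 1" n] assms by (simp add: numeral_2_eq_2 diff_diff_left)
  obtain m where m: "n = m + 2" using assms by (metis add.commute le_Suc_ex)
  have e: "even (n * (n - 1))" by auto
  have "2 * (sg n (n - 1) + 1 + n * (n - 1) div 2) = 4 * n + 2 * (n * (n - 1))"
    using h e unfolding m by (simp add: algebra_simps)
  then have "sg n (n - 1) + 1 + n * (n - 1) div 2 = 2 * n + n * (n - 1)" by simp
  then show ?thesis using e by simp
qed


theorem mainTheorem9: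
  fixes q :: complex and n :: nat
  assumes "q \<noteq> 0" and "n \<ge> 2"
  shows "bigOp q n (Ehat q ^ n) = (-1) ^ (n * (n - 1) div 2) * Pq q n"
proof -
  note q = assms(1)
  define E where "E = Ehat q"
  define P where "P = Pq q"
  define F where "F = (\<lambda>t. (t - E) ^ n)"
  define D where "D = dd F P"
  define d :: "complex fls" where "d = - inverse fls_X"
  have X0: "(fls_X :: complex fls) \<noteq> 0" by simp
  have d0: "d \<noteq> 0" by (simp add: d_def)
  have Xd: "fls_X * d = -1" using X0 by (simp add: d_def)
  have qE: "qdil q E = (1 - E) / fls_X"
    using Ehat_sigma[of q] X0 unfolding E_def by (metis nonzero_mult_div_cancel_left)
  have qP: "qdil q (P l) = (1 - P (Suc l)) / fls_X" for l
    using Pq_sigma[of q l] X0 unfolding P_def by (metis nonzero_mult_div_cancel_left)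
  have hf: "qdil q (F (P l)) = d ^ n * F (P (Suc l))" for l
  proof -
    have "qdil q (F (P l)) = (qdil q (P l) - qdil q E) ^ n"
      by (simp add: F_def qdil_power[OF q])
    also have "\<dots> = (d * (P (Suc l) - E)) ^ n"
      by (simp add: qP qE d_def divide_inverse algebra_simps)
    finally show ?thesis by (simp add: F_def power_mult_distrib)
  qed
  have hp: "qdil q (P a - P b) = d * (P (Suc a) - P (Suc b))" for a b
    by (simp add: qP d_def divide_inverse algebra_simps)
  have inj: "a \<noteq> b \<Longrightarrow> P a \<noteq> P b" for a b
    using Pq_inj[OF q] by (simp add: P_def)
  have tr: "qdil q (D i k) = d ^ n / d ^ k * D (Suc i) k" for i k
    unfolding D_def by (rule dd_transport[where f=F and p=P, OF q d0 hf hp])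
  have tr2: "fls_X ^ (n - k) * qdil q (D i k) = (-1) ^ (n - k) * D (Suc i) k" if "k \<le> n" for i k
  proof -
    have "d ^ n / d ^ k = d ^ (n - k)" using d0 that by (simp add: power_diff)
    then have "fls_X ^ (n - k) * qdil q (D i k) = (fls_X * d) ^ (n - k) * D (Suc i) k"
      by (simp add: tr power_mult_distrib)
    then show ?thesis by (simp add: Xd)
  qed
  have P0: "P 0 = 0" by (simp add: P_def Pq_0)
  have step: "opB q n (n - k) ((-1) ^ s * D 0 k) = (-1) ^ (s + (n - k)) * D 0 (Suc k)"
    if "k \<le> n" for k s
  proof -
    have e: "n + 1 - (n - k) = Suc k" using that by simp
    have "opB q n (n - k) ((-1) ^ s * D 0 k) =
        ((-1) ^ s * (fls_X ^ (n - k) * qdil q (D 0 k)) - (-1) ^ (n - k) * ((-1) ^ s * D 0 k)) / P (Suc k)"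
      unfolding opB_def e P_def by (simp add: qdil_mult[OF q] qdil_neg1_pow mult_ac)
    also have "\<dots> = ((-1) ^ s * (-1) ^ (n - k) * D (Suc 0) k - (-1) ^ s * (-1) ^ (n - k) * D 0 k) / P (Suc k)"
      unfolding tr2[OF that] by (simp only: mult_ac)
    also have "\<dots> = (-1) ^ s * (-1) ^ (n - k) * ((D (Suc 0) k - D 0 k) / (P (0 + Suc k) - P 0))"
      by (simp add: P0 right_diff_distrib[symmetric] times_divide_eq_right)
    also have "\<dots> = (-1) ^ (s + (n - k)) * D 0 (Suc k)"
      by (simp add: D_def power_add)
    finally show ?thesis .
  qed
  have fold: "k \<le> n - 1 \<Longrightarrow> foldr (opB q n) [n + 1 - k..<n + 1] (E ^ n) = (-1) ^ (sg n k) * D 0 k" for k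
  proof (induction k)
    case 0
    have "D 0 0 = (- E) ^ n" by (simp add: D_def F_def P0)
    moreover have "(-1) ^ n * (- E) ^ n = E ^ n" by (simp add: power_mult_distrib[symmetric])
    ultimately show ?case by simp
  next
    case (Suc k)
    have l: "[n + 1 - Suc k..<n + 1] = (n - k) # [n + 1 - k..<n + 1]"
    proof -
      have a: "n + 1 - Suc k = n - k" and b: "Suc (n - k) = n + 1 - k" and c: "n - k < n + 1"
        using Suc.prems by auto
      show ?thesis unfolding a upt_conv_Cons[OF c] b ..
    qed
    have "foldr (opB q n) [n + 1 - Suc k..<n + 1] (E ^ n) = opB q n (n - k) (foldr (opB q n) [n + 1 - k..<n + 1] (E ^ n))"
      by (simp only: l foldr.simps o_apply)
    also have "\<dots> = opB q n (n - k) ((-1) ^ (sg n k) * D 0 k)"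
      using Suc by simp
    also have "\<dots> = (-1) ^ (sg n (Suc k)) * D 0 (Suc k)"
      using Suc.prems by (simp only: step sg.simps)
    finally show ?case .
  qed
  have l2: "[2..<n + 1] = [n + 1 - (n - 1)..<n + 1]" using assms(2) by simp
  have main: "foldr (opB q n) [2..<n + 1] (E ^ n) = (-1) ^ (sg n (n - 1)) * D 0 (n - 1)"
    using fold[of "n - 1"] l2 by simp
  have Dn: "D 0 n = 1"
    unfolding D_def F_def by (subst dd_pow[OF inj]) simp_all
  have sn: "Suc (n - 1) = n" using assms(2) by simp
  define S :: "complex fls" where "S = (-1) ^ (sg n (n - 1))"
  define D0 where "D0 = D 0 (n - 1)"
  define D1 where "D1 = D (Suc 0) (n - 1)"
  have A: "bigOp q n (E ^ n) = fls_X * qdil q (S * D0) + S * D0"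
    unfolding bigOp_def opA_def main S_def D0_def ..
  have B: "fls_X * qdil q D0 = - D1"
    using tr2[of "n - 1" 0] assms(2) by (simp add: D0_def D1_def)
  have C: "D 0 n = (D1 - D0) / P n"
  proof -
    have "D 0 (Suc (n - 1)) = (D1 - D0) / (P (0 + Suc (n - 1)) - P 0)"
      unfolding D_def D1_def D0_def by (rule dd.simps(2))
    then show ?thesis by (simp only: sn P0 add_0 diff_zero)
  qed
  have Pn: "P n \<noteq> 0" using inj[of n 0] assms(2) by (simp add: P0)
  have DD: "D1 - D0 = P n" using C Dn Pn by (simp add: field_simps)
  have "bigOp q n (E ^ n) = S * (fls_X * qdil q D0) + S * D0"
    unfolding A by (simp add: qdil_mult[OF q] qdil_neg1_pow S_def mult_ac)
  also have "\<dots> = - S * (D1 - D0)" by (simp add: B algebra_simps)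
  also have "\<dots> = - S * P n" by (simp add: DD)
  also have "\<dots> = (-1) ^ (n * (n - 1) div 2) * P n"
  proof -
    have "- S = (-1) ^ (sg n (n - 1) + 1)" by (simp add: S_def)
    also have "\<dots> = (-1) ^ (n * (n - 1) div 2)"
      using sg_final[OF assms(2)] by (simp add: minus_one_power_iff)
    finally show ?thesis by simp
  qed
  finally show ?thesis by (simp add: E_def P_def)
qed

end
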